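(* Let $\gamma\in(0,1)$, $\mu\in(0,\infty)\setminus\{1\}$. Let $g$ be a concave traveling wave with compact nonempty support, normalized so that its support is $[L,0]$. Let $s=\sup\{\xi:\sup_x\Phi_\xi[g](x)\ge\gamma\}$, and let $d$ be as in the context. Then for all $x\ge L$: $$\Phi_s[g](x)=\begin{cases}1-\gamma-x-\mu(s-x)_+ & \text{if } x>0,\\ 1-\gamma+g(x)-\mu(s-x)_+ & \text{if } d\le x\le 0,\\ 1-\gamma+g(d)-(d-x)-\mu(s-x)_+ & \text{if } x<d.\end{cases}$$
   Context: Let $\pi(x)=x$ if $x\ge0$ and $\pi(x)=-\infty$ otherwise. Write $x_+=\max(x,0)$ and use $\sup\emptyset=-\infty$. Define $\Phi_\xi[h](x)=1-\gamma-\mu(\xi-x)_++\sup_y(h(y)-|x-y|)$. The dynamics is defined for $n\ge1$ by: - $p_n(x)=\pi[1-\gamma+\sup_y(g_{n-1}(y)-\min(1,\mu)(x-y)_+)]$; - $s_n=\sup\{x:p_n(x)\ge\gamma\}$; - $g_n=\pi\circ\Phi_{s_n}[g_{n-1}]$. A traveling wave with speed $v$ is a $g$ with $g_0=g\Rightarrow g_n(x)=g(x-nv)$ for all $n,x$. The support is $\{g\ge0\}$ and $L=\inf\{x:g(x)>0\}$. Definition of $d$: if the a.e. derivative $g'$ satisfies $g'>1$ somewhere on $(L,0)$, then $d<0$ is the unique point with $g'>1$ on $(L,d)$ and $g'\le1$ on $(d,\infty)$. Otherwise $d:=L$. *)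

theory Defs
  imports "HOL-Analysis.Analysis" "HOL-Library.Extended_Real"
begin

definition pi_cut :: "ereal \<Rightarrow> ereal" where
  "pi_cut x = (if x \<ge> 0 then x else -\<infinity>)"

definition Phi :: "real \<Rightarrow> real \<Rightarrow> ereal \<Rightarrow> (real \<Rightarrow> ereal) \<Rightarrow> real \<Rightarrow> ereal" where
  "Phi \<gamma> \<mu> \<xi> h x =
     ereal (1 - \<gamma>) - ereal \<mu> * max (\<xi> - ereal x) 0 + (SUP y. h y - ereal \<bar>x - y\<bar>)"

definition p_step :: "real \<Rightarrow> real \<Rightarrow> (real \<Rightarrow> ereal) \<Rightarrow> real \<Rightarrow> ereal" where
  "p_step \<gamma> \<mu> h x =
     pi_cut (ereal (1 - \<gamma>) + (SUP y. h y - ereal (min 1 \<mu> * max (x - y) 0)))"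

text \<open>s_n = sup {x. p_n(x) >= gamma} (sup of the empty set is -infinity).\<close>
definition s_step :: "real \<Rightarrow> real \<Rightarrow> (real \<Rightarrow> ereal) \<Rightarrow> ereal" where
  "s_step \<gamma> \<mu> h = Sup {ereal x | x. p_step \<gamma> \<mu> h x \<ge> ereal \<gamma>}"

primrec gseq :: "real \<Rightarrow> real \<Rightarrow> (real \<Rightarrow> ereal) \<Rightarrow> nat \<Rightarrow> real \<Rightarrow> ereal" where
  "gseq \<gamma> \<mu> g 0 = g"
| "gseq \<gamma> \<mu> g (Suc n) =
     (\<lambda>x. pi_cut (Phi \<gamma> \<mu> (s_step \<gamma> \<mu> (gseq \<gamma> \<mu> g n)) (gseq \<gamma> \<mu> g n) x))"

definition traveling_wave :: "real \<Rightarrow> real \<Rightarrow> (real \<Rightarrow> ereal) \<Rightarrow> real \<Rightarrow> bool" where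
  "traveling_wave \<gamma> \<mu> g v \<longleftrightarrow> (\<forall>n x. gseq \<gamma> \<mu> g n x = g (x - real n * v))"

definition has_dg :: "(real \<Rightarrow> ereal) \<Rightarrow> real \<Rightarrow> real \<Rightarrow> bool" where
  "has_dg g x D \<longleftrightarrow> ((\<lambda>t. real_of_ereal (g t)) has_real_derivative D) (at x)"

definition d_of :: "(real \<Rightarrow> ereal) \<Rightarrow> real \<Rightarrow> real" where
  "d_of g L =
    (if \<exists>x\<in>{L<..<0}. \<exists>D. has_dg g x D \<and> D > 1
     then (THE d. d < 0 \<and> (\<forall>x\<in>{L<..<d}. \<forall>D. has_dg g x D \<longrightarrow> D > 1)
                        \<and> (\<forall>x\<in>{d<..}. \<forall>D. has_dg g x D \<longrightarrow> D \<le> 1))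
     else L)"

end

theory Submission
  imports Defs
begin


lemma three_slope:
  fixes h :: "real \<Rightarrow> real"
  assumes "concave_on I h" "x \<in> I" "y \<in> I" "x < t" "t < y"
  shows "(h y - h x)/(y - x) \<le> (h t - h x)/(t - x)"
    and "(h y - h t)/(y - t) \<le> (h y - h x)/(y - x)"
proof -
  have c: "convex_on I (\<lambda>x. - h x)" using assms(1) by (simp add: concave_on_def)
  note A = convex_on_slope_le[OF c assms(2,3,4,5)]
  have e1: "(- h x - - h t) / (x - t) = - ((h t - h x)/(t - x))"
    using assms by (simp add: field_simps)
  have e2: "(- h x - - h y) / (x - y) = - ((h y - h x)/(y - x))"
    using assms by (simp add: field_simps)
  have e3: "(- h t - - h y) / (t - y) = - ((h y - h t)/(y - t))"
    using assms by (simp add: field_simps)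
  show "(h y - h x)/(y - x) \<le> (h t - h x)/(t - x)" using A(1) e1 e2 by simp
  show "(h y - h t)/(y - t) \<le> (h y - h x)/(y - x)" using A(2) e2 e3 by simp
qed

lemma concave_diff_point:
  fixes h :: "real \<Rightarrow> real"
  assumes conc: "concave_on {a..b} h" and ab: "a < b"
  shows "\<exists>c\<in>{a<..<b}. \<exists>D. (h has_real_derivative D) (at c)"
proof -
  define sl where "sl x y = (h y - h x)/(y - x)" for x y
  have sym: "sl x y = sl y x" for x y unfolding sl_def
    by (cases "x = y") (simp_all add: field_simps)
  have T1: "sl x y \<le> sl x t" and T2: "sl t y \<le> sl x y"
    if "a \<le> x" "y \<le> b" "x < t" "t < y" for x y t
    using three_slope[OF conc, of x y t] that unfolding sl_def by auto
  define A where "A = {a<..<b}"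
  define R where "R x = Sup ((\<lambda>y. sl x y) ` {x<..<b})" for x
  have bdd: "bdd_above ((\<lambda>y. sl x y) ` {x<..<b})" if "x \<in> A" for x
  proof (rule bdd_aboveI2)
    fix y assume y: "y \<in> {x<..<b}"
    have "sl x y \<le> sl a y" using T2[of a y x] that y by (auto simp: A_def)
    also have "\<dots> \<le> sl a x" using T1[of a y x] that y by (auto simp: A_def)
    finally show "sl x y \<le> sl a x" .
  qed
  have ne: "{x<..<b} \<noteq> {}" if "x \<in> A" for x using that by (auto simp: A_def)
  have Rge: "sl x y \<le> R x" if "x \<in> A" "y \<in> {x<..<b}" for x y
    unfolding R_def using bdd[OF that(1)] that(2) by (intro cSup_upper) auto
  have Rle: "R x \<le> c" if "x \<in> A" "\<And>y. y \<in> {x<..<b} \<Longrightarrow> sl x y \<le> c" for x c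
    unfolding R_def using ne[OF that(1)] that(2) by (intro cSup_least) auto
  have anti: "R x' \<le> sl x x'" if "x \<in> A" "x' \<in> A" "x < x'" for x x'
  proof (rule Rle[OF that(2)])
    fix y assume y: "y \<in> {x'<..<b}"
    have "sl x' y \<le> sl x y" using T2[of x y x'] that y by (auto simp: A_def)
    also have "\<dots> \<le> sl x x'" using T1[of x y x'] that y by (auto simp: A_def)
    finally show "sl x' y \<le> sl x x'" .
  qed
  have mono: "mono_on A (\<lambda>x. - R x)"
  proof (rule mono_onI)
    fix x x' assume "x \<in> A" "x' \<in> A" "x \<le> x'"
    then show "- R x \<le> - R x'"
    proof (cases "x = x'")
      case False
      with \<open>x \<le> x'\<close> have "x < x'" by simp
      have "R x' \<le> sl x x'" using anti \<open>x \<in> A\<close> \<open>x' \<in> A\<close> \<open>x < x'\<close> by blast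
      also have "\<dots> \<le> R x" using Rge \<open>x \<in> A\<close> \<open>x' \<in> A\<close> \<open>x < x'\<close> by (auto simp: A_def)
      finally show ?thesis by simp
    qed simp
  qed
  have "countable {c\<in>A. \<not> isCont (\<lambda>x. - R x) c}"
    by (rule mono_on_ctble_discont_open[OF _ mono]) (simp add: A_def)
  then obtain c where cA: "c \<in> A" and cc: "c \<notin> {c\<in>A. \<not> isCont (\<lambda>x. - R x) c}"
    using open_minus_countable[of "{c\<in>A. \<not> isCont (\<lambda>x. - R x) c}" A] ab by (auto simp: A_def)
  have "isCont (\<lambda>x. - R x) c" using cc cA by auto
  then have "isCont (\<lambda>x. - (- R x)) c" by (rule isCont_minus)
  then have contR: "isCont R c" by simp
  have "(h has_real_derivative R c) (at c)"
    unfolding has_field_derivative_iff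
  proof (rule tendstoI)
    fix e :: real assume e: "e > 0"
    obtain d where d: "d > 0" "\<And>x'. dist x' c < d \<Longrightarrow> dist (R x') (R c) < e"
      using contR e unfolding continuous_at_eps_delta by blast
    define d' where "d' = min d (min (c - a) (b - c))"
    have d': "d' > 0" using d cA by (auto simp: d'_def A_def)
    show "\<forall>\<^sub>F y in at c. dist ((h y - h c) / (y - c)) (R c) < e"
      unfolding eventually_at
    proof (intro exI[of _ d'] conjI allI impI ballI)
      show "d' > 0" by fact
      fix y assume y: "y \<in> UNIV" "y \<noteq> c \<and> dist y c < d'"
      have yA: "y \<in> A" using y cA by (auto simp: d'_def A_def dist_real_def)
      have Ry: "\<bar>R y - R c\<bar> < e" using d(2)[of y] y by (auto simp: d'_def dist_real_def)
      have eq: "(h y - h c) / (y - c) = sl c y" by (simp add: sl_def)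
      show "dist ((h y - h c) / (y - c)) (R c) < e"
      proof (cases "y > c")
        case True
        have "R y \<le> sl c y" using anti[OF cA yA True] .
        moreover have "sl c y \<le> R c" using Rge[OF cA] True yA by (auto simp: A_def)
        ultimately show ?thesis using Ry eq by (auto simp: dist_real_def)
      next
        case False
        then have yc: "y < c" using y by auto
        have "R c \<le> sl y c"
        proof (rule Rle[OF cA])
          fix z assume z: "z \<in> {c<..<b}"
          have "sl c z \<le> sl y z" using T2[of y z c] yc z yA by (auto simp: A_def)
          also have "\<dots> \<le> sl y c" using T1[of y z c] yc z yA by (auto simp: A_def)
          finally show "sl c z \<le> sl y c" .
        qed
        moreover have "sl y c \<le> R y" using Rge[OF yA] yc cA by (auto simp: A_def)
        ultimately show ?thesis using Ry eq sym[of c y] by (auto simp: dist_real_def)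
      qed
    qed
  qed
  then show ?thesis using cA by (auto simp: A_def)
qed

lemma sup_helper:
  fixes g :: "real \<Rightarrow> ereal" and h k :: "real \<Rightarrow> real"
  assumes out: "\<And>y. y \<notin> S \<Longrightarrow> g y = -\<infinity>" and inn: "\<And>y. y \<in> S \<Longrightarrow> g y = ereal (h y)"
    and ne: "y0 \<in> S" and bd: "\<And>y. y \<in> S \<Longrightarrow> h y - k y \<le> B"
  shows "\<exists>r. (SUP y. g y - ereal (k y)) = ereal r \<and> (\<forall>y\<in>S. h y - k y \<le> r)
           \<and> (\<forall>c. (\<forall>y\<in>S. h y - k y \<le> c) \<longrightarrow> r \<le> c)"
proof -
  define V where "V = (SUP y. g y - ereal (k y))"
  have up: "ereal (h y - k y) \<le> V" if "y \<in> S" for y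
    unfolding V_def using inn[OF that] by (intro SUP_upper2[of y]) auto
  have lo: "V \<le> ereal c" if "\<forall>y\<in>S. h y - k y \<le> c" for c
    unfolding V_def
  proof (rule SUP_least)
    fix y show "g y - ereal (k y) \<le> ereal c"
      using that out[of y] inn[of y] by (cases "y \<in> S") auto
  qed
  have V1: "V \<le> ereal B" using lo bd by blast
  have V2: "ereal (h y0 - k y0) \<le> V" using up ne by blast
  obtain r where r: "V = ereal r" using V1 V2 by (cases V) auto
  show ?thesis
    apply (rule exI[of _ r])
    using up lo r by (auto simp: V_def)
qed



theorem corollaryS3p3:
  fixes \<gamma> \<mu> L v :: real and g :: "real \<Rightarrow> ereal"
  assumes "0 < \<gamma>" "\<gamma> < 1" "0 < \<mu>" "\<mu> \<noteq> 1"
    and "traveling_wave \<gamma> \<mu> g v"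
    and "L \<le> 0" "{x. g x \<ge> 0} = {L..0}"
    and "\<forall>x. g x \<noteq> \<infinity>"
    and "concave_on {L..0} (\<lambda>x. real_of_ereal (g x))"
  shows "\<exists>s::real. Sup {ereal \<xi> | \<xi>. (SUP x. Phi \<gamma> \<mu> (ereal \<xi>) g x) \<ge> ereal \<gamma>} = ereal s \<and>
     (\<forall>x\<ge>L. Phi \<gamma> \<mu> (ereal s) g x =
        (if x > 0 then ereal (1 - \<gamma> - x - \<mu> * max (s - x) 0)
         else if d_of g L \<le> x then ereal (1 - \<gamma>) + g x - ereal (\<mu> * max (s - x) 0)
         else ereal (1 - \<gamma>) + g (d_of g L) - ereal (d_of g L - x) - ereal (\<mu> * max (s - x) 0)))"
proof -
  note g1 = assms(1) and g2 = assms(2) and mu0 = assms(3) and TW = assms(5) and L0 = assms(6)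
    and supp = assms(7) and ninf = assms(8)
  define h where "h = (\<lambda>x. real_of_ereal (g x))"
  have conc: "concave_on {L..0} h" using assms(9) by (simp add: h_def)
  have dg: "has_dg g w D \<longleftrightarrow> (h has_real_derivative D) (at w)" for w D
    by (simp add: has_dg_def h_def)
  have tw: "g (x - v) = pi_cut (Phi \<gamma> \<mu> (s_step \<gamma> \<mu> g) g x)" for x
    using TW unfolding traveling_wave_def by (metis One_nat_def gseq.simps of_nat_1 mult_1)
  have suppI: "g y \<ge> 0 \<longleftrightarrow> L \<le> y \<and> y \<le> 0" for y
    using supp by (auto simp: set_eq_iff)
  have pic: "pi_cut z = -\<infinity> \<or> pi_cut z \<ge> 0" for z by (simp add: pi_cut_def)
  have gout: "g y = -\<infinity>" if "\<not> (L \<le> y \<and> y \<le> 0)" for y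
  proof -
    have "g y = pi_cut (Phi \<gamma> \<mu> (s_step \<gamma> \<mu> g) g (y + v))" using tw[of "y + v"] by simp
    then show ?thesis using pic suppI that by metis
  qed
  have gin: "g y = ereal (h y)" "h y \<ge> 0" if "L \<le> y" "y \<le> 0" for y
  proof -
    have "g y \<ge> 0" using suppI that by blast
    then show "g y = ereal (h y)" "h y \<ge> 0" using ninf unfolding h_def
      by (cases "g y"; auto)+
  qed
  have hB: "h y \<le> 2 * h (L/2)" if "L \<le> y" "y \<le> 0" for y
  proof -
    have c: "convex_on {L..0} (\<lambda>x. - h x)" using conc by (simp add: concave_on_def)
    have e: "(1 - 1/2) *\<^sub>R y + (1/2) *\<^sub>R (L - y) = L/2" by (simp add: field_simps)
    have A: "- h (L/2) \<le> (1 - 1/2) * - h y + (1/2) * - h (L - y)"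
      using convex_onD[OF c, of "1/2" y "L - y"] that unfolding e by auto
    moreover have "h (L - y) \<ge> 0" using gin(2)[of "L - y"] that by auto
    ultimately show ?thesis by simp
  qed
  define Bh where "Bh = 2 * h (L/2)"
  have hB': "h y - k \<le> Bh" if "L \<le> y" "y \<le> 0" "k \<ge> 0" for y k
    using hB[OF that(1,2)] that(3) by (simp add: Bh_def)
  have L0in: "(0::real) \<in> {L..0}" using L0 by auto
  have "\<exists>r. (SUP y. g y - ereal \<bar>x - y\<bar>) = ereal r \<and> (\<forall>y\<in>{L..0}. h y - \<bar>x - y\<bar> \<le> r)
           \<and> (\<forall>c. (\<forall>y\<in>{L..0}. h y - \<bar>x - y\<bar> \<le> c) \<longrightarrow> r \<le> c)" for x
    by (rule sup_helper[where B = Bh]) (use gout gin hB' L0in in \<open>auto\<close>)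
  then have "\<forall>x. \<exists>r. (SUP y. g y - ereal \<bar>x - y\<bar>) = ereal r \<and> (\<forall>y\<in>{L..0}. h y - \<bar>x - y\<bar> \<le> r)
           \<and> (\<forall>c. (\<forall>y\<in>{L..0}. h y - \<bar>x - y\<bar> \<le> c) \<longrightarrow> r \<le> c)" by blast
  from choice[OF this] obtain Gr where GrA: "\<forall>x. (SUP y. g y - ereal \<bar>x - y\<bar>) = ereal (Gr x) \<and> (\<forall>y\<in>{L..0}. h y - \<bar>x - y\<bar> \<le> Gr x)
           \<and> (\<forall>c. (\<forall>y\<in>{L..0}. h y - \<bar>x - y\<bar> \<le> c) \<longrightarrow> Gr x \<le> c)"
    by blast
  have GrS: "(SUP y. g y - ereal \<bar>x - y\<bar>) = ereal (Gr x)" for x using GrA by blast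
  have Grge: "h y - \<bar>x - y\<bar> \<le> Gr x" if "L \<le> y" "y \<le> 0" for x y using GrA that by auto
  have Grle: "Gr x \<le> c" if "\<And>y. L \<le> y \<Longrightarrow> y \<le> 0 \<Longrightarrow> h y - \<bar>x - y\<bar> \<le> c" for x c
    using GrA that by auto
  define m where "m = min 1 \<mu>"
  have m0: "m > 0" "m \<le> 1" "m \<le> \<mu>" using mu0 by (auto simp: m_def)
  have "\<exists>r. (SUP y. g y - ereal (m * max (x - y) 0)) = ereal r \<and> (\<forall>y\<in>{L..0}. h y - m * max (x - y) 0 \<le> r)
           \<and> (\<forall>c. (\<forall>y\<in>{L..0}. h y - m * max (x - y) 0 \<le> c) \<longrightarrow> r \<le> c)" for x
    by (rule sup_helper[where B = Bh]) (use gout gin hB' L0in m0 in \<open>auto\<close>)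
  then have "\<forall>x. \<exists>r. (SUP y. g y - ereal (m * max (x - y) 0)) = ereal r \<and> (\<forall>y\<in>{L..0}. h y - m * max (x - y) 0 \<le> r)
           \<and> (\<forall>c. (\<forall>y\<in>{L..0}. h y - m * max (x - y) 0 \<le> c) \<longrightarrow> r \<le> c)" by blast
  from choice[OF this] obtain Pr where PrA: "\<forall>x. (SUP y. g y - ereal (m * max (x - y) 0)) = ereal (Pr x) \<and> (\<forall>y\<in>{L..0}. h y - m * max (x - y) 0 \<le> Pr x)
           \<and> (\<forall>c. (\<forall>y\<in>{L..0}. h y - m * max (x - y) 0 \<le> c) \<longrightarrow> Pr x \<le> c)"
    by blast
  have PrS: "(SUP y. g y - ereal (m * max (x - y) 0)) = ereal (Pr x)" for x using PrA by blast
  have Prge: "h y - m * max (x - y) 0 \<le> Pr x" if "L \<le> y" "y \<le> 0" for x y using PrA that by auto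
  have Prle: "Pr x \<le> c" if "\<And>y. L \<le> y \<Longrightarrow> y \<le> 0 \<Longrightarrow> h y - m * max (x - y) 0 \<le> c" for x c
    using PrA that by auto
  have PhiE: "Phi \<gamma> \<mu> (ereal \<sigma>) g x = ereal (1 - \<gamma> - \<mu> * max (\<sigma> - x) 0 + Gr x)" for \<sigma> x
    unfolding Phi_def GrS by (simp add: max_def zero_ereal_def)
  have PhiM: "Phi \<gamma> \<mu> (-\<infinity>) g x = ereal (1 - \<gamma> + Gr x)" for x
    unfolding Phi_def GrS by (simp add: max_def zero_ereal_def)
  have pstep: "p_step \<gamma> \<mu> g \<xi> = pi_cut (ereal (1 - \<gamma> + Pr \<xi>))" for \<xi>
    unfolding p_step_def m_def[symmetric] PrS by simp
  have SupPhi: "(SUP x. Phi \<gamma> \<mu> (ereal \<xi>) g x) = ereal (1 - \<gamma> + Pr \<xi>)" for \<xi>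
  proof -
    have ub: "(SUP x. Phi \<gamma> \<mu> (ereal \<xi>) g x) \<le> ereal (1 - \<gamma> + Pr \<xi>)"
    proof (rule SUP_least)
      fix x
      have "Gr x \<le> Pr \<xi> + \<mu> * max (\<xi> - x) 0"
      proof (rule Grle)
        fix y assume y: "L \<le> y" "y \<le> 0"
        have a: "h y - m * max (\<xi> - y) 0 \<le> Pr \<xi>" using Prge y by blast
        have "m * max (\<xi> - y) 0 \<le> \<bar>x - y\<bar> + \<mu> * max (\<xi> - x) 0"
        proof (cases "\<xi> \<le> y")
          case True then show ?thesis using mu0 by simp
        next
          case False
          have "m * (\<xi> - y) \<le> m * (\<bar>x - y\<bar> + max (\<xi> - x) 0)"
            using m0 by (intro mult_left_mono) auto
          also have "\<dots> = m * \<bar>x - y\<bar> + m * max (\<xi> - x) 0" by (simp add: algebra_simps)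
          also have "\<dots> \<le> \<bar>x - y\<bar> + \<mu> * max (\<xi> - x) 0"
            using m0 by (intro add_mono mult_right_mono) (auto intro: mult_left_le_one_le)
          finally show ?thesis using False by simp
        qed
        then show "h y - \<bar>x - y\<bar> \<le> Pr \<xi> + \<mu> * max (\<xi> - x) 0" using a by linarith
      qed
      then show "Phi \<gamma> \<mu> (ereal \<xi>) g x \<le> ereal (1 - \<gamma> + Pr \<xi>)" unfolding PhiE by simp
    qed
    then obtain R where R: "(SUP x. Phi \<gamma> \<mu> (ereal \<xi>) g x) = ereal R"
      using PhiE[of \<xi> 0] SUP_upper[of 0 UNIV "Phi \<gamma> \<mu> (ereal \<xi>) g"]
      by (cases "(SUP x. Phi \<gamma> \<mu> (ereal \<xi>) g x)") auto
    have "Pr \<xi> \<le> R - (1 - \<gamma>)"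
    proof (rule Prle)
      fix y assume y: "L \<le> y" "y \<le> 0"
      obtain x where x: "- \<mu> * max (\<xi> - x) 0 - \<bar>x - y\<bar> = - m * max (\<xi> - y) 0"
      proof (cases "\<xi> \<le> y")
        case True then show ?thesis using that[of y] by simp
      next
        case False
        show ?thesis
        proof (cases "\<mu> \<le> 1")
          case True then show ?thesis using that[of y] False by (simp add: m_def)
        next
          case F2: False then show ?thesis using that[of \<xi>] False by (simp add: m_def)
        qed
      qed
      have "Phi \<gamma> \<mu> (ereal \<xi>) g x \<le> ereal R" unfolding R[symmetric] by (rule SUP_upper) simp
      then have "1 - \<gamma> - \<mu> * max (\<xi> - x) 0 + Gr x \<le> R" unfolding PhiE by simp
      moreover have "h y - \<bar>x - y\<bar> \<le> Gr x" using Grge y by blast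
      ultimately show "h y - m * max (\<xi> - y) 0 \<le> R - (1 - \<gamma>)" using x by linarith
    qed
    then have "ereal (1 - \<gamma> + Pr \<xi>) \<le> (SUP x. Phi \<gamma> \<mu> (ereal \<xi>) g x)" unfolding R by simp
    with ub show ?thesis by (rule antisym)
  qed
  have picut: "pi_cut (ereal r) \<ge> ereal \<gamma> \<longleftrightarrow> r \<ge> \<gamma>" for r
    using g1 by (auto simp: pi_cut_def)
  define Q where "Q = {\<xi>. \<gamma> \<le> 1 - \<gamma> + Pr \<xi>}"
  have set1: "{ereal \<xi> | \<xi>. (SUP x. Phi \<gamma> \<mu> (ereal \<xi>) g x) \<ge> ereal \<gamma>} = ereal ` Q"
    unfolding SupPhi Q_def by auto
  have set2: "s_step \<gamma> \<mu> g = Sup (ereal ` Q)"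
    unfolding s_step_def pstep picut Q_def by (rule arg_cong[where f = Sup]) auto
  have Qbd: "\<xi> \<le> max 0 ((1 + Bh) / m)" if "\<xi> \<in> Q" for \<xi>
  proof (rule ccontr)
    assume "\<not> ?thesis"
    then have x0: "\<xi> > 0" and x1: "\<xi> > (1 + Bh) / m" by auto
    have "m * \<xi> > 1 + Bh" using x1 m0 by (simp add: field_simps)
    have "Pr \<xi> \<le> Bh - m * \<xi>"
    proof (rule Prle)
      fix y assume y: "L \<le> y" "y \<le> 0"
      have "h y \<le> Bh" using hB'[OF y, of 0] by simp
      moreover have "m * \<xi> \<le> m * max (\<xi> - y) 0" using m0 y by (intro mult_left_mono) auto
      ultimately show "h y - m * max (\<xi> - y) 0 \<le> Bh - m * \<xi>" by linarith
    qed
    then show False using that \<open>m * \<xi> > 1 + Bh\<close> g1 g2 by (simp add: Q_def)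
  qed
  have Qne: "Q \<noteq> {}"
  proof
    assume Qe: "Q = {}"
    then have "s_step \<gamma> \<mu> g = -\<infinity>" using set2 by (simp add: bot_ereal_def)
    then have tw0: "g (x - v) = pi_cut (ereal (1 - \<gamma> + Gr x))" for x using tw[of x] PhiM by simp
    have "Pr L \<le> Pr L - (1 - \<gamma>)"
    proof (rule Prle)
      fix y assume y: "L \<le> y" "y \<le> 0"
      have "h y - \<bar>y - y\<bar> \<le> Gr y" using Grge y by blast
      then have gy: "1 - \<gamma> + Gr y \<ge> 1 - \<gamma> + h y" by simp
      have pos: "1 - \<gamma> + Gr y \<ge> 0" using gy gin(2)[OF y] g2 by linarith
      have "g (y - v) = ereal (1 - \<gamma> + Gr y)" using tw0[of y] pos by (simp add: pi_cut_def)
      then have "g (y - v) \<ge> 0" using pos by simp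
      then have yv: "L \<le> y - v" "y - v \<le> 0" using suppI by auto
      have "h (y - v) = 1 - \<gamma> + Gr y" using gin(1)[OF yv] \<open>g (y - v) = ereal (1 - \<gamma> + Gr y)\<close> by simp
      moreover have "h (y - v) - m * max (L - (y - v)) 0 \<le> Pr L" using Prge yv by blast
      moreover have "max (L - (y - v)) 0 = 0" using yv by simp
      ultimately show "h y - m * max (L - y) 0 \<le> Pr L - (1 - \<gamma>)" using gy y by simp
    qed
    then show False using g2 by simp
  qed
  then obtain \<xi>0 where \<xi>0: "\<xi>0 \<in> Q" by blast
  define K where "K = max 0 ((1 + Bh) / m)"
  have "Sup (ereal ` Q) \<le> ereal K"
    by (rule Sup_least) (use Qbd in \<open>auto simp: K_def[symmetric]\<close>)
  moreover have "ereal \<xi>0 \<le> Sup (ereal ` Q)" by (rule Sup_upper) (use \<xi>0 in auto)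
  ultimately obtain s where sdef: "Sup (ereal ` Q) = ereal s" by (cases "Sup (ereal ` Q)") auto
  have ss: "s_step \<gamma> \<mu> g = ereal s" using set2 sdef by simp
  define F where "F x = 1 - \<gamma> - \<mu> * max (s - x) 0 + Gr x" for x
  have twF: "g (x - v) = pi_cut (ereal (F x))" for x using tw[of x] unfolding ss PhiE F_def .
  have hF: "h y = F (y + v)" if "L \<le> y" "y \<le> 0" for y
  proof -
    have "g y = pi_cut (ereal (F (y + v)))" using twF[of "y + v"] by simp
    then show ?thesis using gin[OF that] by (auto simp: pi_cut_def split: if_splits)
  qed
  have Fneg: "F (y + v) < 0" if "\<not> (L \<le> y \<and> y \<le> 0)" for y
  proof (rule ccontr)
    assume "\<not> F (y + v) < 0"
    then have "g y \<ge> 0" using twF[of "y + v"] by (simp add: pi_cut_def)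
    then show False using suppI that by blast
  qed
  have Grlip: "Gr x \<le> Gr x' + \<bar>x - x'\<bar>" for x x'
  proof (rule Grle)
    fix y assume y: "L \<le> y" "y \<le> 0"
    have "h y - \<bar>x' - y\<bar> \<le> Gr x'" using Grge y by blast
    then show "h y - \<bar>x - y\<bar> \<le> Gr x' + \<bar>x - x'\<bar>" by linarith
  qed
  have Fdiff: "F x - F x' \<le> \<bar>x - x'\<bar> + \<mu> * (max (s - x') 0 - max (s - x) 0)" for x x'
    using Grlip[of x x'] by (simp add: F_def algebra_simps)
  have maxlip: "\<bar>max (s - x') 0 - max (s - x) 0\<bar> \<le> \<bar>x - x'\<bar>" for x x' by (simp add: max_def abs_if)
  have Flip: "\<bar>F x - F x'\<bar> \<le> (1 + \<mu>) * \<bar>x - x'\<bar>" for x x'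
  proof -
    have a: "\<mu> * (max (s - x') 0 - max (s - x) 0) \<le> \<mu> * \<bar>x - x'\<bar>"
      using maxlip[of x' x] mu0 by (intro mult_left_mono) auto
    have b: "\<mu> * (max (s - x) 0 - max (s - x') 0) \<le> \<mu> * \<bar>x - x'\<bar>"
      using maxlip[of x x'] mu0 by (intro mult_left_mono) auto
    show ?thesis using Fdiff[of x x'] Fdiff[of x' x] a b by (simp add: algebra_simps abs_minus_commute abs_le_iff)
  qed
  have h0: "h 0 = 0"
  proof (rule ccontr)
    assume "h 0 \<noteq> 0"
    then have t: "h 0 > 0" using gin(2)[of 0] L0 by auto
    have "F (h 0 + v) < 0" using Fneg[of "h 0"] t by auto
    moreover have "F v - F (h 0 + v) \<le> h 0"
    proof -
      have "\<mu> * (max (s - (h 0 + v)) 0 - max (s - v) 0) \<le> 0"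
        using mu0 t by (intro mult_nonneg_nonpos) auto
      then show ?thesis using Fdiff[of v "h 0 + v"] t by simp
    qed
    moreover have "h 0 = F v" using hF[of 0] L0 by simp
    ultimately show False by linarith
  qed
  have hle: "h y \<le> - y" if "L \<le> y" "y \<le> 0" for y
  proof -
    have "F (y + v) - F v \<le> \<bar>y\<bar> + \<mu> * (max (s - v) 0 - max (s - (y + v)) 0)"
      using Fdiff[of "y + v" v] by simp
    moreover have "\<mu> * (max (s - v) 0 - max (s - (y + v)) 0) \<le> 0"
      using mu0 that by (intro mult_nonneg_nonpos) auto
    moreover have "h 0 = F v" using hF[of 0] L0 by simp
    ultimately show ?thesis using hF[OF that] h0 that by simp
  qed
  have hlip: "\<bar>h y - h y'\<bar> \<le> (1 + \<mu>) * \<bar>y - y'\<bar>" if "L \<le> y" "y \<le> 0" "L \<le> y'" "y' \<le> 0" for y y'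
    using hF[OF that(1,2)] hF[OF that(3,4)] Flip[of "y + v" "y' + v"] by simp
  have Lne: "L \<in> {L..0}" using L0 by auto
  have tangent: "h y \<le> h w + D * (y - w)"
    if "L < w" "w < 0" "(h has_real_derivative D) (at w)" "L \<le> y" "y \<le> 0" for w y D
  proof -
    have c: "convex_on {L..0} (\<lambda>x. - h x)" using conc by (simp add: concave_on_def)
    have d: "((\<lambda>x. - h x) has_field_derivative - D) (at w within {L..0})"
      using DERIV_minus[OF that(3)] by (rule has_field_derivative_at_within)
    have "- D * (y - w) \<le> - h y - - h w"
      by (rule convex_on_imp_above_tangent[OF c connected_Icc _ _ d]) (use that in auto)
    then show ?thesis by (simp add: algebra_simps)
  qed
  have dpos: "D \<le> 1" if w0: "w \<ge> 0" and wD: "(h has_real_derivative D) (at w)" for w D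
  proof (rule ccontr)
    assume "\<not> D \<le> 1"
    then obtain e where e: "e > 0" "\<And>t. t > 0 \<Longrightarrow> t < e \<Longrightarrow> h w < h (w + t)"
      using DERIV_pos_inc_right[OF wD] by force
    have hz: "h z = 0" if "z > 0" for z using gout[of z] that by (simp add: h_def)
    have "h w = 0" using w0 h0 hz by (cases "w = 0") auto
    moreover have "h (w + e/2) = 0" using hz[of "w + e/2"] w0 e by simp
    ultimately show False using e(2)[of "e/2"] e(1) by simp
  qed
  have dhalf: "D \<le> 1" if "L < w" "w < 0" "L \<le> 2 * w" "(h has_real_derivative D) (at w)" for w D
  proof -
    have "h L \<le> h w + D * (L - w)" using tangent[OF that(1,2,4) order_refl L0] .
    then have "D * (w - L) \<le> h w - h L" by (simp add: algebra_simps)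
    also have "\<dots> \<le> - w" using hle[of w] gin(2)[of L] that L0 by simp
    also have "\<dots> \<le> w - L" using that by simp
    finally have "D * (w - L) \<le> 1 * (w - L)" by simp
    then show "D \<le> 1" by (rule mult_right_le_imp_le) (use that in simp)
  qed
  have dmono: "D2 \<le> D1" if "L < w1" "w1 < w2" "w2 < 0" "(h has_real_derivative D1) (at w1)"
    "(h has_real_derivative D2) (at w2)" for w1 w2 D1 D2
  proof -
    have a: "h w2 \<le> h w1 + D1 * (w2 - w1)" using tangent[OF _ _ that(4)] that by simp
    have b: "h w1 \<le> h w2 + D2 * (w1 - w2)" using tangent[OF _ _ that(5)] that by simp
    have "D2 * (w2 - w1) \<le> D1 * (w2 - w1)" using a b by (simp add: algebra_simps)
    then show ?thesis by (rule mult_right_le_imp_le) (use that in simp)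
  qed
  have exd: "\<exists>c\<in>{a<..<b}. \<exists>D. (h has_real_derivative D) (at c)" if "L \<le> a" "a < b" "b \<le> 0" for a b
  proof -
    have c: "convex_on {L..0} (\<lambda>x. - h x)" using conc by (simp add: concave_on_def)
    have "{a..b} \<subseteq> {L..0}" using that by auto
    then have "convex_on {a..b} (\<lambda>x. - h x)" by (rule convex_on_subset[OF c]) simp
    then have "concave_on {a..b} h" by (simp add: concave_on_def)
    then show ?thesis by (rule concave_diff_point[OF _ that(2)])
  qed
  have L1: "\<exists>w\<in>{x<..<y}. \<exists>D. (h has_real_derivative D) (at w) \<and> D > 1"
    if "L \<le> x" "x < y" "y \<le> 0" "h y - h x > y - x" for x y
  proof -
    define \<delta> where "\<delta> = (h y - h x) - (y - x)"
    define \<eta> where "\<eta> = min ((y - x)/2) (\<delta> / (2 * \<mu>))"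
    have \<delta>: "\<delta> > 0" using that by (simp add: \<delta>_def)
    have e1: "\<eta> > 0" using \<delta> that mu0 by (simp add: \<eta>_def)
    have e2: "\<eta> < y - x" using that e1 by (simp add: \<eta>_def min_def)
    have e3: "\<eta> \<le> \<delta> / (2 * \<mu>)" by (simp add: \<eta>_def)
    have "\<mu> * \<eta> \<le> \<mu> * (\<delta> / (2 * \<mu>))" using e3 mu0 by (intro mult_left_mono) auto
    also have "\<dots> = \<delta> / 2" using mu0 by simp
    finally have e4: "\<mu> * \<eta> \<le> \<delta> / 2" .
    note \<eta> = e1 e2 e4
    have "L \<le> x" "x < x + \<eta>" "x + \<eta> \<le> 0" using that e1 e2 by auto
    from exd[OF this] obtain w D where w: "w \<in> {x<..<x + \<eta>}" and D: "(h has_real_derivative D) (at w)"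
      by blast
    have wy: "x < w" "w < y" using w \<eta> by auto
    have "h y \<le> h w + D * (y - w)" using tangent[OF _ _ D] that wy by simp
    moreover have "h w \<le> h x + (1 + \<mu>) * (w - x)"
    proof -
      have "\<bar>h w - h x\<bar> \<le> (1 + \<mu>) * \<bar>w - x\<bar>" using hlip[of w x] that wy by simp
      moreover have "\<bar>w - x\<bar> = w - x" using wy by simp
      ultimately show ?thesis by linarith
    qed
    moreover have "\<mu> * (w - x) \<le> \<mu> * \<eta>" using w mu0 by (intro mult_left_mono) auto
    moreover have "(1 + \<mu>) * (w - x) = (w - x) + \<mu> * (w - x)" by (simp add: algebra_simps)
    ultimately have "D * (y - w) > y - w" using \<eta> \<delta> \<delta>_def by linarith
    then have "D > 1" using wy by (simp add: mult_less_cancel_right2)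
    then show ?thesis using w D wy by auto
  qed
  have L2: "\<exists>w\<in>{y<..<x}. \<exists>D. (h has_real_derivative D) (at w) \<and> D < 1"
    if "L \<le> y" "y < x" "x \<le> 0" "h x - h y < x - y" for x y
  proof -
    define \<delta> where "\<delta> = (x - y) - (h x - h y)"
    define \<eta> where "\<eta> = min ((x - y)/2) (\<delta> / (2 * (2 + \<mu>)))"
    have \<delta>: "\<delta> > 0" using that by (simp add: \<delta>_def)
    have e1: "\<eta> > 0" using \<delta> that mu0 by (simp add: \<eta>_def)
    have "\<eta> \<le> (x - y) / 2" unfolding \<eta>_def by (rule min.cobounded1)
    then have e2: "\<eta> < x - y" using that(2) by (simp add: field_simps)
    have e3: "\<eta> \<le> \<delta> / (2 * (2 + \<mu>))" by (simp add: \<eta>_def)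
    have "(2 + \<mu>) * \<eta> \<le> (2 + \<mu>) * (\<delta> / (2 * (2 + \<mu>)))" using e3 mu0 by (intro mult_left_mono) auto
    also have "\<dots> = \<delta> / 2" using mu0 by (simp add: field_simps)
    finally have e4: "(2 + \<mu>) * \<eta> \<le> \<delta> / 2" .
    note \<eta> = e1 e2 e4
    have "L \<le> x - \<eta>" "x - \<eta> < x" "x \<le> 0" using that e1 e2 by auto
    from exd[OF this] obtain w D where w: "w \<in> {x - \<eta><..<x}" and D: "(h has_real_derivative D) (at w)"
      by blast
    have wy: "y < w" "w < x" using w \<eta> by auto
    have "h y \<le> h w + D * (y - w)" using tangent[OF _ _ D] that wy by simp
    moreover have "h w \<le> h x + (1 + \<mu>) * (x - w)"
    proof -
      have "\<bar>h w - h x\<bar> \<le> (1 + \<mu>) * \<bar>w - x\<bar>" using hlip[of w x] that wy by simp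
      moreover have "\<bar>w - x\<bar> = x - w" using wy by simp
      ultimately have "\<bar>h w - h x\<bar> \<le> (1 + \<mu>) * (x - w)" by simp
      then show ?thesis using abs_le_D1 by fastforce
    qed
    moreover have "(2 + \<mu>) * (x - w) \<le> (2 + \<mu>) * \<eta>" using w mu0 by (intro mult_left_mono) auto
    moreover have "(2 + \<mu>) * (x - w) = (x - w) + (1 + \<mu>) * (x - w)" by (simp add: algebra_simps)
    moreover have "D * (y - w) = - (D * (w - y))" by (simp add: algebra_simps)
    ultimately have "D * (w - y) < w - y" using \<eta> \<delta> \<delta>_def by linarith
    then have "D < 1" using wy by (simp add: mult_less_cancel_right1)
    then show ?thesis using w D wy by auto
  qed
  have F3: "- (x - y) \<le> h x - h y" if "L \<le> y" "y < x" "x \<le> 0" for x y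
  proof (cases "x = 0")
    case True then show ?thesis using hle[of y] h0 that by simp
  next
    case False
    then have x0: "x < 0" using that by simp
    have "(h 0 - h y) / (0 - y) \<le> (h x - h y) / (x - y)"
      using three_slope(1)[OF conc, of y 0 x] that x0 by auto
    moreover have "(h 0 - h y) / (0 - y) \<ge> -1" using hle[of y] h0 that x0 by (simp add: field_simps)
    ultimately have "-1 \<le> (h x - h y) / (x - y)" by linarith
    then show ?thesis using that by (simp add: field_simps)
  qed
  have dprops: "L \<le> d_of g L \<and> d_of g L \<le> 0
     \<and> (\<forall>x y. d_of g L \<le> x \<longrightarrow> x < y \<longrightarrow> y \<le> 0 \<longrightarrow> h y - h x \<le> y - x)
     \<and> (\<forall>x y. L \<le> y \<longrightarrow> y < x \<longrightarrow> x \<le> d_of g L \<longrightarrow> x - y \<le> h x - h y)"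
  proof (cases "\<exists>x\<in>{L<..<0}. \<exists>D. has_dg g x D \<and> D > 1")
    case False
    then have dL: "d_of g L = L" unfolding d_of_def by (rule if_not_P)
    have "h y - h x \<le> y - x" if a: "L \<le> x" "x < y" "y \<le> 0" for x y
    proof (rule ccontr)
      assume "\<not> ?thesis"
      then have "h y - h x > y - x" by simp
      then obtain w D where "w \<in> {x<..<y}" "(h has_real_derivative D) (at w)" "D > 1"
        using L1[OF a] by blast
      then show False using False a by (auto simp: dg)
    qed
    then show ?thesis using dL L0 by auto
  next
    case True
    define S where "S = {x\<in>{L<..<0}. \<exists>D. (h has_real_derivative D) (at x) \<and> D > 1}"
    have "\<exists>x0. x0 \<in> S" using True by (auto simp: S_def dg)
    then obtain x0 where x0: "x0 \<in> S" by blast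
    have Sne: "S \<noteq> {}" using x0 by blast
    have Sbdd: "bdd_above S" by (rule bdd_aboveI[of _ 0]) (auto simp: S_def)
    define d0 where "d0 = Sup S"
    have Lneg: "L < 0" using x0 by (auto simp: S_def)
    have Shalf: "2 * x < L" if "x \<in> S" for x
    proof (rule ccontr)
      assume "\<not> 2 * x < L"
      then show False using that dhalf by (force simp: S_def)
    qed
    have d0h: "d0 \<le> L / 2" unfolding d0_def
      by (rule cSup_least[OF Sne]) (use Shalf in force)
    have d0L: "L < d0" unfolding d0_def
      using cSup_upper[OF x0 Sbdd] x0 by (auto simp: S_def)
    have PA: "D > 1" if "x \<in> {L<..<d0}" "(h has_real_derivative D) (at x)" for x D
    proof -
      have "x < Sup S" using that(1) by (simp add: d0_def)
      then obtain x' where x': "x' \<in> S" "x < x'"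
        using less_cSup_iff[OF Sne Sbdd, of x] by blast
      then obtain D' where "(h has_real_derivative D') (at x')" "D' > 1" by (auto simp: S_def)
      moreover have "D' \<le> D" using dmono[OF _ x'(2) _ that(2)] that x' calculation by (auto simp: S_def)
      ultimately show ?thesis by simp
    qed
    have PB: "D \<le> 1" if "x \<in> {d0<..}" "(h has_real_derivative D) (at x)" for x D
    proof (cases "x \<ge> 0")
      case True then show ?thesis using dpos that by blast
    next
      case False
      show ?thesis
      proof (rule ccontr)
        assume "\<not> D \<le> 1"
        then have "x \<in> S" using that False d0L by (auto simp: S_def)
        then have "x \<le> d0" unfolding d0_def by (rule cSup_upper[OF _ Sbdd])
        then show False using that by simp
      qed
    qed
    have dd: "d_of g L = d0"
      unfolding d_of_def if_P[OF True]
    proof (rule the_equality)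
      show "d0 < 0 \<and> (\<forall>x\<in>{L<..<d0}. \<forall>D. has_dg g x D \<longrightarrow> D > 1) \<and> (\<forall>x\<in>{d0<..}. \<forall>D. has_dg g x D \<longrightarrow> D \<le> 1)"
        using PA PB d0h Lneg by (auto simp: dg)
    next
      fix d1 assume d1: "d1 < 0 \<and> (\<forall>x\<in>{L<..<d1}. \<forall>D. has_dg g x D \<longrightarrow> D > 1) \<and> (\<forall>x\<in>{d1<..}. \<forall>D. has_dg g x D \<longrightarrow> D \<le> 1)"
      show "d1 = d0"
      proof (rule ccontr)
        assume ne: "d1 \<noteq> d0"
        show False
        proof (cases "d1 < d0")
          case True
          obtain w D where w: "w \<in> {max d1 L<..<d0}" "(h has_real_derivative D) (at w)"
            using exd[of "max d1 L" d0] True d0L d0h Lneg by auto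
          have "D > 1" using PA w by auto
          moreover have "D \<le> 1" using d1 w by (auto simp: dg)
          ultimately show False by simp
        next
          case False
          then have "d0 < d1" using ne by simp
          obtain w D where w: "w \<in> {d0<..<d1}" "(h has_real_derivative D) (at w)"
            using exd[of d0 d1] \<open>d0 < d1\<close> d0L d1 by auto
          have "D \<le> 1" using PB w by auto
          moreover have "D > 1" using d1 w d0L by (auto simp: dg)
          ultimately show False by simp
        qed
      qed
    qed
    have F1: "h y - h x \<le> y - x" if a: "d0 \<le> x" "x < y" "y \<le> 0" for x y
    proof (rule ccontr)
      assume "\<not> ?thesis"
      then have "h y - h x > y - x" by simp
      moreover have "L \<le> x" using a d0L by simp
      ultimately obtain w D where "w \<in> {x<..<y}" "(h has_real_derivative D) (at w)" "D > 1"
        using L1[of x y] a by blast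
      then show False using PB[of w D] a by auto
    qed
    have F2: "x - y \<le> h x - h y" if a: "L \<le> y" "y < x" "x \<le> d0" for x y
    proof (rule ccontr)
      assume "\<not> ?thesis"
      then have "h x - h y < x - y" by simp
      moreover have "x \<le> 0" using a d0h Lneg by simp
      ultimately obtain w D where "w \<in> {y<..<x}" "(h has_real_derivative D) (at w)" "D < 1"
        using L2[of y x] a by blast
      then show False using PA[of w D] a by auto
    qed
    show ?thesis using dd F1 F2 d0L d0h Lneg by auto
  qed
  define d where "d = d_of g L"
  have dL: "L \<le> d" "d \<le> 0" and F1: "\<And>x y. d \<le> x \<Longrightarrow> x < y \<Longrightarrow> y \<le> 0 \<Longrightarrow> h y - h x \<le> y - x"
    and F2: "\<And>x y. L \<le> y \<Longrightarrow> y < x \<Longrightarrow> x \<le> d \<Longrightarrow> x - y \<le> h x - h y"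
    using dprops by (auto simp: d_def)
  have Gpos: "Gr x = - x" if "x > 0" for x
  proof (rule antisym)
    show "Gr x \<le> - x" by (rule Grle) (use hle that in force)
    show "- x \<le> Gr x" using Grge[of 0 x] h0 L0 that by simp
  qed
  have Gmid: "Gr x = h x" if "d \<le> x" "x \<le> 0" for x
  proof (rule antisym)
    show "Gr x \<le> h x"
    proof (rule Grle)
      fix y assume y: "L \<le> y" "y \<le> 0"
      show "h y - \<bar>x - y\<bar> \<le> h x"
      proof (cases "y < x")
        case True then show ?thesis using F3[OF y(1) True that(2)] by simp
      next
        case False
        then show ?thesis using F1[of x y] that y by (cases "x = y") auto
      qed
    qed
    show "h x \<le> Gr x" using Grge[of x x] that dL by simp
  qed
  have Glow: "Gr x = h d - (d - x)" if "L \<le> x" "x < d" for x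
  proof (rule antisym)
    show "Gr x \<le> h d - (d - x)"
    proof (rule Grle)
      fix y assume y: "L \<le> y" "y \<le> 0"
      show "h y - \<bar>x - y\<bar> \<le> h d - (d - x)"
      proof (cases "d < y")
        case True then show ?thesis using F1[OF order_refl True y(2)] that by simp
      next
        case False
        then have "d - y \<le> h d - h y" using F2[OF y(1) _ order_refl] by (cases "y = d") auto
        then show ?thesis using that by (simp add: abs_if)
      qed
    qed
    show "h d - (d - x) \<le> Gr x" using Grge[of d x] that dL by simp
  qed
  show ?thesis
  proof (intro exI[of _ s] conjI allI impI)
    show "Sup {ereal \<xi> | \<xi>. (SUP x. Phi \<gamma> \<mu> (ereal \<xi>) g x) \<ge> ereal \<gamma>} = ereal s"
      unfolding set1 sdef ..
    fix x :: real assume xL: "L \<le> x"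
    show "Phi \<gamma> \<mu> (ereal s) g x =
        (if x > 0 then ereal (1 - \<gamma> - x - \<mu> * max (s - x) 0)
         else if d_of g L \<le> x then ereal (1 - \<gamma>) + g x - ereal (\<mu> * max (s - x) 0)
         else ereal (1 - \<gamma>) + g (d_of g L) - ereal (d_of g L - x) - ereal (\<mu> * max (s - x) 0))"
    proof (cases "x > 0")
      case True then show ?thesis using Gpos[OF True] by (simp add: PhiE)
    next
      case F: False
      show ?thesis
      proof (cases "d \<le> x")
        case True then show ?thesis using F Gmid[OF True] gin(1)[of x] xL by (simp add: PhiE d_def[symmetric])
      next
        case False then show ?thesis using F Glow[OF xL] gin(1)[of d] dL by (simp add: PhiE d_def[symmetric])
      qed
    qed
  qed
qed

end
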